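(* Suppose $\ell'$ is $\beta$-Lipschitz and $|\ell'|\le G$ on $\mathbb{R}$. Let $R\ge1$ and $\beta(R):=2L^2R^{2L-2}(\beta+G)$. Then $\mathcal{R}$ is $\beta(R)$-smooth on $B(R)$: for all $W,V\in B(R)$, $\|\nabla\mathcal{R}(W)-\nabla\mathcal{R}(V)\|\le\beta(R)\|W-V\|$.
   Context: Given $z_1,\dots,z_n\in\mathbb{R}^d$ with $\|z_i\|\le1$. A depth-$L$ linear network is $W=(W_L,\dots,W_1)$ with $W_k\in\mathbb{R}^{d_k\times d_{k-1}}$, $d_0=d$, $d_L=1$, $w_{\mathrm{prod}}:=(W_L\cdots W_1)^\top$, and $\mathcal{R}(W)=\frac1n\sum_{i=1}^n\ell(\langle w_{\mathrm{prod}},z_i\rangle)$. $\|W\|$ denotes the Euclidean norm of all entries of $W$ jointly, and $\|\cdot\|_F$ the Frobenius norm. $B(R):=\{W:\|W_k\|_F\le R\text{ for all }1\le k\le L\}$. *)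

theory Defs
  imports "HOL-Analysis.Analysis"
begin

text \<open>Matrices of size m x p are represented as functions nat => nat => real,
  only entries with row < m and column < p being meaningful.
  A network parameter W is a function k => matrix, layer k (1 <= k <= L)
  having size (d k) x (d (k-1)).\<close>

type_synonym mat = "nat \<Rightarrow> nat \<Rightarrow> real"
type_synonym params = "nat \<Rightarrow> mat"

definition mat_mul :: "nat \<Rightarrow> mat \<Rightarrow> mat \<Rightarrow> mat" where
  "mat_mul m A B = (\<lambda>i j. \<Sum>l<m. A i l * B l j)"

definition mat_id :: mat where
  "mat_id = (\<lambda>i j. if i = j then 1 else 0)"

fun prod_upto :: "(nat \<Rightarrow> nat) \<Rightarrow> params \<Rightarrow> nat \<Rightarrow> mat" where
  "prod_upto d W 0 = mat_id"
| "prod_upto d W (Suc k) = mat_mul (d k) (W (Suc k)) (prod_upto d W k)"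

text \<open>w_prod = (W_L \<cdots> W_1)^T, a vector of length d 0.\<close>
definition w_prod :: "(nat \<Rightarrow> nat) \<Rightarrow> nat \<Rightarrow> params \<Rightarrow> nat \<Rightarrow> real" where
  "w_prod d L W = (\<lambda>j. prod_upto d W L 0 j)"

definition risk :: "(real \<Rightarrow> real) \<Rightarrow> nat \<Rightarrow> (nat \<Rightarrow> nat \<Rightarrow> real)
    \<Rightarrow> (nat \<Rightarrow> nat) \<Rightarrow> nat \<Rightarrow> params \<Rightarrow> real" where
  "risk loss n z d L W =
     (1 / real n) * (\<Sum>i<n. loss (\<Sum>j<d 0. w_prod d L W j * z i j))"

definition frob :: "nat \<Rightarrow> nat \<Rightarrow> mat \<Rightarrow> real" where
  "frob m p A = sqrt (\<Sum>i<m. \<Sum>j<p. (A i j)\<^sup>2)"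

definition pnorm :: "(nat \<Rightarrow> nat) \<Rightarrow> nat \<Rightarrow> params \<Rightarrow> real" where
  "pnorm d L W = sqrt (\<Sum>k\<in>{1..L}. \<Sum>i<d k. \<Sum>j<d (k - 1). (W k i j)\<^sup>2)"

definition ball_R :: "(nat \<Rightarrow> nat) \<Rightarrow> nat \<Rightarrow> real \<Rightarrow> params set" where
  "ball_R d L R = {W. \<forall>k\<in>{1..L}. frob (d k) (d (k - 1)) (W k) \<le> R}"

definition perturb :: "params \<Rightarrow> nat \<Rightarrow> nat \<Rightarrow> nat \<Rightarrow> real \<Rightarrow> params" where
  "perturb W k i j t = W(k := (W k)(i := (W k i)(j := W k i j + t)))"

definition grad :: "(params \<Rightarrow> real) \<Rightarrow> params \<Rightarrow> params" where
  "grad F W = (\<lambda>k i j. deriv (\<lambda>t. F (perturb W k i j t)) 0)"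

definition vnorm :: "nat \<Rightarrow> (nat \<Rightarrow> real) \<Rightarrow> real" where
  "vnorm m x = sqrt (\<Sum>j<m. (x j)\<^sup>2)"

end

theory Submission
  imports Defs
begin


fun hiA :: "(nat\<Rightarrow>nat) \<Rightarrow> nat \<Rightarrow> params \<Rightarrow> nat \<Rightarrow> nat \<Rightarrow> real" where
  "hiA d L W 0 = (\<lambda>a. if a = 0 then 1 else 0)"
| "hiA d L W (Suc r) = (\<lambda>a. \<Sum>m<d (L - r). hiA d L W r m * W (L - r) m a)"

definition gv :: "(nat\<Rightarrow>nat) \<Rightarrow> (nat \<Rightarrow> real) \<Rightarrow> params \<Rightarrow> nat \<Rightarrow> nat \<Rightarrow> real" where
  "gv d zz W m b = (\<Sum>j<d 0. prod_upto d W m b j * zz j)"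

lemma gv_0: "gv d zz W 0 b = zz b" if "b < d 0"
proof -
  have "gv d zz W 0 b = (\<Sum>j<d 0. if b = j then zz j else 0)"
    unfolding gv_def by (rule sum.cong) (auto simp: mat_id_def)
  then show ?thesis using that by simp
qed

lemma gv_Suc: "gv d zz W (Suc m) a = (\<Sum>b<d m. W (Suc m) a b * gv d zz W m b)"
  unfolding gv_def by (simp add: mat_mul_def sum_distrib_left sum_distrib_right mult.assoc sum.swap[of _ "{..<d 0}"])

lemma s_fact:
  assumes "d L = 1" "r \<le> L"
  shows "(\<Sum>j<d 0. w_prod d L W j * zz j) = (\<Sum>a<d (L-r). hiA d L W r a * gv d zz W (L-r) a)"
  using assms(2)
proof (induction r)
  case 0
  then show ?case using assms(1) by (simp add: gv_def w_prod_def)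
next
  case (Suc r)
  have e: "L - r = Suc (L - Suc r)" using Suc.prems by simp
  have "(\<Sum>a<d (L-r). hiA d L W r a * gv d zz W (L-r) a)
     = (\<Sum>a<d (L-r). hiA d L W r a * (\<Sum>b<d (L - Suc r). W (L-r) a b * gv d zz W (L - Suc r) b))"
    by (simp only: e gv_Suc)
  also have "\<dots> = (\<Sum>b<d (L - Suc r). (\<Sum>a<d (L-r). hiA d L W r a * W (L-r) a b) * gv d zz W (L - Suc r) b)"
    by (simp add: sum_distrib_left sum_distrib_right mult.assoc sum.swap[of _ "{..<d (L - r)}"])
  also have "\<dots> = (\<Sum>b<d (L - Suc r). hiA d L W (Suc r) b * gv d zz W (L - Suc r) b)"
    by simp
  finally show ?case using Suc by simp
qed

lemma prod_upto_cong: "(\<forall>l. 1 \<le> l \<and> l \<le> m \<longrightarrow> W l = V l) \<Longrightarrow> prod_upto d W m = prod_upto d V m"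
  by (induction m) auto

lemma gv_cong: "(\<forall>l. 1 \<le> l \<and> l \<le> m \<longrightarrow> W l = V l) \<Longrightarrow> gv d zz W m = gv d zz V m"
  unfolding gv_def[abs_def] using prod_upto_cong by metis

lemma hiA_cong: "r \<le> L \<Longrightarrow> (\<forall>l. L - r < l \<and> l \<le> L \<longrightarrow> W l = V l) \<Longrightarrow> hiA d L W r = hiA d L V r"
proof (induction r)
  case 0 then show ?case by simp
next
  case (Suc r)
  have "hiA d L W r = hiA d L V r" by (rule Suc.IH) (use Suc.prems in auto)
  moreover have "W (L - r) = V (L - r)" using Suc.prems by auto
  ultimately show ?case by simp
qed

lemma perturb_apply: "perturb W k i j t l a b = (if l = k \<and> a = i \<and> b = j then W k i j + t else W l a b)"
  by (simp add: perturb_def)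

definition sfun :: "(nat\<Rightarrow>nat) \<Rightarrow> nat \<Rightarrow> (nat \<Rightarrow> real) \<Rightarrow> params \<Rightarrow> real" where
  "sfun d L zz W = (\<Sum>j<d 0. w_prod d L W j * zz j)"

lemma s_perturb:
  assumes dL: "d L = 1" and k: "1 \<le> k" "k \<le> L" and ij: "i < d k" "j < d (k-1)"
  shows "sfun d L zz (perturb W k i j t) = sfun d L zz W + t * (hiA d L W (L-k) i * gv d zz W (k-1) j)"
proof -
  define P where "P = perturb W k i j t"
  have Pl: "P l = W l" if "l \<noteq> k" for l using that by (simp add: P_def perturb_def)
  have kk: "L - (L - k) = k" "k = Suc (k - 1)" using k by auto
  have hP: "hiA d L P (L-k) = hiA d L W (L-k)"
    by (rule hiA_cong) (use Pl k in auto)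
  have gP: "gv d zz P (k-1) = gv d zz W (k-1)"
    by (rule gv_cong) (use Pl k in auto)
  define h where "h = hiA d L W (L-k)"
  define g where "g = gv d zz W (k-1)"
  have expand: "sfun d L zz V = (\<Sum>a<d k. hiA d L V (L-k) a * (\<Sum>b<d (k-1). V k a b * gv d zz V (k-1) b))" for V
  proof -
    have "sfun d L zz V = (\<Sum>a<d (L-(L-k)). hiA d L V (L-k) a * gv d zz V (L-(L-k)) a)"
      unfolding sfun_def by (rule s_fact) (use dL in auto)
    also have "\<dots> = (\<Sum>a<d k. hiA d L V (L-k) a * gv d zz V (Suc (k-1)) a)"
      using kk by simp
    moreover obtain m where "k = Suc m" using k by (cases k) auto
    ultimately show ?thesis by (simp add: gv_Suc)
  qed
  have inner: "(\<Sum>b<d (k-1). P k a b * g b) = (\<Sum>b<d (k-1). W k a b * g b) + (if a = i then t * g j else 0)" for a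
  proof -
    have "(\<Sum>b<d (k-1). P k a b * g b) = (\<Sum>b<d (k-1). W k a b * g b + (if a = i \<and> b = j then t * g b else 0))"
      by (rule sum.cong) (auto simp: P_def perturb_def algebra_simps)
    also have "\<dots> = (\<Sum>b<d (k-1). W k a b * g b) + (\<Sum>b<d (k-1). (if a = i \<and> b = j then t * g b else 0))"
      by (rule sum.distrib)
    also have "(\<Sum>b<d (k-1). (if a = i \<and> b = j then t * g b else 0)) = (if a = i then t * g j else 0)"
      using ij by (cases "a = i") auto
    finally show ?thesis .
  qed
  have "sfun d L zz P = (\<Sum>a<d k. h a * ((\<Sum>b<d (k-1). W k a b * g b) + (if a = i then t * g j else 0)))"
    unfolding expand hP gP h_def[symmetric] g_def[symmetric] inner ..
  also have "\<dots> = (\<Sum>a<d k. h a * (\<Sum>b<d (k-1). W k a b * g b)) + (\<Sum>a<d k. (if a = i then h a * (t * g j) else 0))"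
    unfolding sum.distrib[symmetric] by (rule sum.cong) (auto simp: distrib_left)
  also have "(\<Sum>a<d k. (if a = i then h a * (t * g j) else 0)) = h i * (t * g j)"
    using ij by simp
  also have "(\<Sum>a<d k. h a * (\<Sum>b<d (k-1). W k a b * g b)) = sfun d L zz W"
    unfolding expand h_def g_def ..
  finally show ?thesis unfolding P_def h_def g_def by (simp add: algebra_simps)
qed

lemma grad_formula:
  assumes dL: "d L = 1" and dl: "\<forall>x. (loss has_real_derivative dl x) (at x)"
    and k: "1 \<le> k" "k \<le> L" and ij: "i < d k" "j < d (k-1)"
  shows "grad (risk loss n z d L) W k i j
     = 1 / real n * (\<Sum>x<n. dl (sfun d L (z x) W) * (hiA d L W (L-k) i * gv d (z x) W (k-1) j))"
proof -
  define c where "c x = hiA d L W (L-k) i * gv d (z x) W (k-1) j" for x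
  have eq: "(\<lambda>t. risk loss n z d L (perturb W k i j t)) = (\<lambda>t. 1 / real n * (\<Sum>x<n. loss (sfun d L (z x) W + t * c x)))"
    by (rule ext) (simp add: risk_def sfun_def[symmetric] s_perturb[OF dL k ij] c_def)
  have "((\<lambda>t. 1 / real n * (\<Sum>x<n. loss (sfun d L (z x) W + t * c x))) has_real_derivative
        1 / real n * (\<Sum>x<n. dl (sfun d L (z x) W + 0 * c x) * c x)) (at 0)"
  proof (intro DERIV_cmult DERIV_sum)
    fix x
    have "((\<lambda>t. sfun d L (z x) W + t * c x) has_real_derivative c x) (at 0)"
      by (auto intro!: derivative_eq_intros)
    then show "((\<lambda>t. loss (sfun d L (z x) W + t * c x)) has_real_derivative dl (sfun d L (z x) W + 0 * c x) * c x) (at 0)"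
      using DERIV_chain2[OF dl[rule_format]] by blast
  qed
  then show ?thesis unfolding grad_def eq c_def by (simp add: DERIV_imp_deriv)
qed

lemma vnorm_L2: "vnorm m x = L2_set x {..<m}"
  by (simp add: vnorm_def L2_set_def)

lemma frob_L2: "frob m p A = L2_set (\<lambda>i. L2_set (A i) {..<p}) {..<m}"
  by (simp add: frob_def L2_set_def sum_nonneg)

lemma pnorm_L2: "pnorm d L F = L2_set (\<lambda>k. frob (d k) (d (k-1)) (F k)) {1..L}"
  by (simp add: pnorm_def frob_def L2_set_def sum_nonneg)

lemma L2_abs: "L2_set (\<lambda>i. \<bar>f i\<bar>) A = L2_set f A"
  by (simp add: L2_set_def)

lemma vnorm_nonneg: "0 \<le> vnorm m x" by (simp add: vnorm_def sum_nonneg)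
lemma frob_nonneg: "0 \<le> frob m p A" by (simp add: frob_def sum_nonneg)
lemma pnorm_nonneg: "0 \<le> pnorm d L F" by (simp add: pnorm_def sum_nonneg)

lemma vnorm_cong: "(\<And>i. i < m \<Longrightarrow> x i = y i) \<Longrightarrow> vnorm m x = vnorm m y"
  unfolding vnorm_def by (metis (no_types, lifting) lessThan_iff sum.cong)

lemma vnorm_add: "vnorm m (\<lambda>i. x i + y i) \<le> vnorm m x + vnorm m y"
  unfolding vnorm_L2 by (rule L2_set_triangle_ineq)

lemma MV: "vnorm m (\<lambda>i. \<Sum>j<p. A i j * v j) \<le> frob m p A * vnorm p v"
proof -
  have "vnorm m (\<lambda>i. \<Sum>j<p. A i j * v j) = L2_set (\<lambda>i. \<bar>\<Sum>j<p. A i j * v j\<bar>) {..<m}"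
    by (simp add: vnorm_L2 L2_abs)
  also have "\<dots> \<le> L2_set (\<lambda>i. L2_set (A i) {..<p} * L2_set v {..<p}) {..<m}"
  proof (rule L2_set_mono)
    fix i
    have "\<bar>\<Sum>j<p. A i j * v j\<bar> \<le> (\<Sum>j<p. \<bar>A i j\<bar> * \<bar>v j\<bar>)"
      by (rule order_trans[OF sum_abs]) (simp add: abs_mult)
    also have "\<dots> \<le> L2_set (A i) {..<p} * L2_set v {..<p}" by (rule L2_set_mult_ineq)
    finally show "\<bar>\<Sum>j<p. A i j * v j\<bar> \<le> L2_set (A i) {..<p} * L2_set v {..<p}" .
  qed simp
  also have "\<dots> = frob m p A * vnorm p v"
    unfolding frob_L2 vnorm_L2 by (rule L2_set_left_distrib[symmetric]) simp
  finally show ?thesis .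
qed

lemma frob_transpose: "frob p m (\<lambda>j i. A i j) = frob m p A"
  unfolding frob_def by (rule arg_cong[where f=sqrt]) (rule sum.swap)

lemma VM: "vnorm p (\<lambda>j. \<Sum>i<m. u i * A i j) \<le> vnorm m u * frob m p A"
proof -
  have 1: "vnorm p (\<lambda>j. \<Sum>i<m. u i * A i j) = vnorm p (\<lambda>j. \<Sum>i<m. A i j * u i)"
    unfolding vnorm_def by (simp add: mult_ac)
  have 2: "vnorm p (\<lambda>j. \<Sum>i<m. A i j * u i) \<le> frob p m (\<lambda>j i. A i j) * vnorm m u"
    using MV[where m=p and p=m and A="\<lambda>j i. A i j" and v=u] .
  show ?thesis using 1 2 frob_transpose[of p m A] by (simp add: mult_ac)
qed

lemma frob_add: "frob m p (\<lambda>i j. A i j + B i j) \<le> frob m p A + frob m p B"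
proof -
  have "frob m p (\<lambda>i j. A i j + B i j) \<le> L2_set (\<lambda>i. L2_set (A i) {..<p} + L2_set (B i) {..<p}) {..<m}"
    unfolding frob_L2 by (rule L2_set_mono) (auto intro: L2_set_triangle_ineq)
  also have "\<dots> \<le> frob m p A + frob m p B"
    unfolding frob_L2 by (rule L2_set_triangle_ineq)
  finally show ?thesis .
qed

lemma pnorm_add: "pnorm d L (\<lambda>k i j. F k i j + F' k i j) \<le> pnorm d L F + pnorm d L F'"
proof -
  have "pnorm d L (\<lambda>k i j. F k i j + F' k i j) \<le> L2_set (\<lambda>k. frob (d k) (d (k-1)) (F k) + frob (d k) (d (k-1)) (F' k)) {1..L}"
    unfolding pnorm_L2 by (rule L2_set_mono) (simp_all only: frob_add frob_nonneg)
  also have "\<dots> \<le> pnorm d L F + pnorm d L F'"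
    unfolding pnorm_L2 by (rule L2_set_triangle_ineq)
  finally show ?thesis .
qed

lemma pnorm_scale: "pnorm d L (\<lambda>k i j. c * F k i j) = \<bar>c\<bar> * pnorm d L F"
proof -
  have "pnorm d L (\<lambda>k i j. c * F k i j) = sqrt (c\<^sup>2 * (\<Sum>k\<in>{1..L}. \<Sum>i<d k. \<Sum>j<d (k - 1). (F k i j)\<^sup>2))"
    by (simp add: pnorm_def power_mult_distrib sum_distrib_left)
  then show ?thesis by (simp add: pnorm_def real_sqrt_mult)
qed

lemma pnorm_sum: "finite X \<Longrightarrow> pnorm d L (\<lambda>k i j. \<Sum>x\<in>X. F x k i j) \<le> (\<Sum>x\<in>X. pnorm d L (F x))"
proof (induction X rule: finite_induct)
  case empty then show ?case by (simp add: pnorm_def)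
next
  case (insert a X)
  have "pnorm d L (\<lambda>k i j. \<Sum>x\<in>insert a X. F x k i j) = pnorm d L (\<lambda>k i j. F a k i j + (\<Sum>x\<in>X. F x k i j))"
    using insert by simp
  also have "\<dots> \<le> pnorm d L (F a) + pnorm d L (\<lambda>k i j. \<Sum>x\<in>X. F x k i j)"
    by (rule pnorm_add)
  finally show ?case using insert by simp
qed

lemma pnorm_cong: "(\<And>k i j. k \<in> {1..L} \<Longrightarrow> i < d k \<Longrightarrow> j < d (k-1) \<Longrightarrow> F k i j = F' k i j)
   \<Longrightarrow> pnorm d L F = pnorm d L F'"
  unfolding pnorm_def by (intro arg_cong[where f=sqrt] sum.cong) auto

lemma frob_outer: "frob m p (\<lambda>i j. a i * b j) = vnorm m a * vnorm p b"
  unfolding frob_def vnorm_def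
  by (simp add: power_mult_distrib sum_product[symmetric] real_sqrt_mult)

lemma outer_bound:
  assumes "\<And>k. k \<in> {1..L} \<Longrightarrow> vnorm (d k) (a k) * vnorm (d (k-1)) (b k) \<le> P"
  shows "pnorm d L (\<lambda>k i j. a k i * b k j) \<le> real L * P"
proof -
  have "pnorm d L (\<lambda>k i j. a k i * b k j) \<le> (\<Sum>k\<in>{1..L}. vnorm (d k) (a k) * vnorm (d (k-1)) (b k))"
    unfolding pnorm_L2 frob_outer by (rule L2_set_le_sum) (simp add: vnorm_nonneg)
  also have "\<dots> \<le> real (card {1..L}) * P" by (rule sum_bounded_above) (use assms in auto)
  finally show ?thesis by simp
qed



lemma Wk: "\<forall>k\<in>{1..L}. frob (d k) (d (k-1)) (W k) \<le> R \<Longrightarrow> 1 \<le> k \<Longrightarrow> k \<le> L \<Longrightarrow> frob (d k) (d (k-1)) (W k) \<le> R"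
  by auto

lemma N1:
  assumes W: "\<forall>k\<in>{1..L}. frob (d k) (d (k-1)) (W k) \<le> R" and z: "vnorm (d 0) zz \<le> 1"
    and R: "R \<ge> 1"
  shows "m \<le> L \<Longrightarrow> vnorm (d m) (gv d zz W m) \<le> R^m"
proof (induction m)
  case 0
  have "vnorm (d 0) (gv d zz W 0) = vnorm (d 0) zz" by (rule vnorm_cong) (simp add: gv_0)
  then show ?case using z by simp
next
  case (Suc m)
  have "vnorm (d (Suc m)) (gv d zz W (Suc m)) = vnorm (d (Suc m)) (\<lambda>a. \<Sum>b<d m. W (Suc m) a b * gv d zz W m b)"
    by (rule vnorm_cong) (simp add: gv_Suc)
  also have "\<dots> \<le> frob (d (Suc m)) (d m) (W (Suc m)) * vnorm (d m) (gv d zz W m)" by (rule MV)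
  also have "\<dots> \<le> R * R^m"
    by (rule mult_mono) (use Wk[OF W, of "Suc m"] Suc R in \<open>auto simp: vnorm_nonneg\<close>)
  finally show ?case by simp
qed

lemma N2:
  assumes W: "\<forall>k\<in>{1..L}. frob (d k) (d (k-1)) (W k) \<le> R" and dL: "d L = 1"
    and R: "R \<ge> 1"
  shows "r \<le> L \<Longrightarrow> vnorm (d (L-r)) (hiA d L W r) \<le> R^r"
proof (induction r)
  case 0
  then show ?case using dL by (simp add: vnorm_def)
next
  case (Suc r)
  have e: "L - Suc r = L - r - 1" by simp
  have "vnorm (d (L - Suc r)) (hiA d L W (Suc r)) = vnorm (d (L - r - 1)) (\<lambda>a. \<Sum>m<d (L - r). hiA d L W r m * W (L - r) m a)"
    by (simp only: e hiA.simps)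
  also have "\<dots> \<le> vnorm (d (L-r)) (hiA d L W r) * frob (d (L-r)) (d (L - r - 1)) (W (L-r))" by (rule VM)
  also have "\<dots> \<le> R^r * R"
  proof (rule mult_mono)
    have "L - r \<in> {1..L}" using Suc.prems by auto
    from W[rule_format, OF this] show "frob (d (L-r)) (d (L - r - 1)) (W (L-r)) \<le> R" by simp
  qed (use R Suc in \<open>auto simp: frob_nonneg\<close>)
  finally show ?case by (simp add: mult.commute)
qed

definition ee :: "(nat\<Rightarrow>nat) \<Rightarrow> params \<Rightarrow> params \<Rightarrow> nat \<Rightarrow> real" where
  "ee d W V l = frob (d l) (d (l-1)) (\<lambda>a b. W l a b - V l a b)"

lemma ee_nonneg: "0 \<le> ee d W V l" by (simp add: ee_def frob_nonneg)

lemma D1: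
  assumes W: "\<forall>k\<in>{1..L}. frob (d k) (d (k-1)) (W k) \<le> R"
    and V: "\<forall>k\<in>{1..L}. frob (d k) (d (k-1)) (V k) \<le> R"
    and z: "vnorm (d 0) zz \<le> 1" and R: "R \<ge> 1"
  shows "m \<le> L \<Longrightarrow> vnorm (d m) (\<lambda>a. gv d zz W m a - gv d zz V m a) \<le> R^(m-1) * (\<Sum>l\<in>{1..m}. ee d W V l)"
proof (induction m)
  case 0
  have "vnorm (d 0) (\<lambda>a. gv d zz W 0 a - gv d zz V 0 a) = vnorm (d 0) (\<lambda>a. 0)"
    by (rule vnorm_cong) (simp add: gv_0)
  then show ?case by (simp add: vnorm_def)
next
  case (Suc m)
  define S where "S = (\<Sum>l\<in>{1..m}. ee d W V l)"
  have S0: "S \<ge> 0" unfolding S_def by (rule sum_nonneg) (simp add: ee_nonneg)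
  have IH: "vnorm (d m) (\<lambda>a. gv d zz W m a - gv d zz V m a) \<le> R^(m-1) * S"
    using Suc S_def by simp
  have "vnorm (d (Suc m)) (\<lambda>a. gv d zz W (Suc m) a - gv d zz V (Suc m) a)
     = vnorm (d (Suc m)) (\<lambda>a. (\<Sum>b<d m. W (Suc m) a b * (gv d zz W m b - gv d zz V m b))
                              + (\<Sum>b<d m. (W (Suc m) a b - V (Suc m) a b) * gv d zz V m b))"
    by (rule vnorm_cong) (simp add: gv_Suc sum_subtractf[symmetric] sum.distrib[symmetric] algebra_simps)
  also have "\<dots> \<le> vnorm (d (Suc m)) (\<lambda>a. \<Sum>b<d m. W (Suc m) a b * (gv d zz W m b - gv d zz V m b))
                 + vnorm (d (Suc m)) (\<lambda>a. \<Sum>b<d m. (W (Suc m) a b - V (Suc m) a b) * gv d zz V m b)"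
    by (rule vnorm_add)
  also have "\<dots> \<le> frob (d (Suc m)) (d m) (W (Suc m)) * vnorm (d m) (\<lambda>b. gv d zz W m b - gv d zz V m b)
                 + ee d W V (Suc m) * vnorm (d m) (gv d zz V m)"
    unfolding ee_def by (intro add_mono) (simp_all add: MV)
  also have "\<dots> \<le> R * (R^(m-1) * S) + ee d W V (Suc m) * R^m"
  proof (intro add_mono mult_mono)
    show "vnorm (d m) (gv d zz V m) \<le> R ^ m" using N1[OF V z R] Suc by simp
  qed (use Wk[OF W, of "Suc m"] Suc IH R in \<open>auto simp: vnorm_nonneg ee_nonneg\<close>)
  also have "\<dots> \<le> R^m * (S + ee d W V (Suc m))"
  proof (cases m)
    case 0 then show ?thesis by (simp add: S_def)
  next
    case (Suc m') then show ?thesis by (simp add: algebra_simps)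
  qed
  also have "S + ee d W V (Suc m) = (\<Sum>l\<in>{1..Suc m}. ee d W V l)"
    by (simp add: S_def)
  finally show ?case by simp
qed

lemma D2:
  assumes W: "\<forall>k\<in>{1..L}. frob (d k) (d (k-1)) (W k) \<le> R"
    and V: "\<forall>k\<in>{1..L}. frob (d k) (d (k-1)) (V k) \<le> R"
    and dL: "d L = 1" and R: "R \<ge> 1"
  shows "r \<le> L \<Longrightarrow> vnorm (d (L-r)) (\<lambda>a. hiA d L W r a - hiA d L V r a) \<le> R^(r-1) * (\<Sum>l\<in>{L-r<..L}. ee d W V l)"
proof (induction r)
  case 0
  then show ?case by (simp add: vnorm_def)
next
  case (Suc r)
  define S where "S = (\<Sum>l\<in>{L-r<..L}. ee d W V l)"
  have S0: "S \<ge> 0" unfolding S_def by (rule sum_nonneg) (simp add: ee_nonneg)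
  define M where "M = W (L - r)"
  define N where "N = V (L - r)"
  have IH: "vnorm (d (L-r)) (\<lambda>a. hiA d L W r a - hiA d L V r a) \<le> R^(r-1) * S"
    using Suc S_def by simp
  have e: "L - Suc r = L - r - 1" by simp
  have "vnorm (d (L - Suc r)) (\<lambda>a. hiA d L W (Suc r) a - hiA d L V (Suc r) a)
     = vnorm (d (L - r - 1)) (\<lambda>a. (\<Sum>m<d (L-r). (hiA d L W r m - hiA d L V r m) * M m a)
                              + (\<Sum>m<d (L-r). hiA d L V r m * (M m a - N m a)))"
    unfolding e by (rule vnorm_cong) (simp add: M_def N_def sum_subtractf[symmetric] sum.distrib[symmetric] algebra_simps)
  also have "\<dots> \<le> vnorm (d (L - r - 1)) (\<lambda>a. \<Sum>m<d (L-r). (hiA d L W r m - hiA d L V r m) * M m a)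
                 + vnorm (d (L - r - 1)) (\<lambda>a. \<Sum>m<d (L-r). hiA d L V r m * (M m a - N m a))"
    by (rule vnorm_add)
  also have "\<dots> \<le> vnorm (d (L-r)) (\<lambda>m. hiA d L W r m - hiA d L V r m) * frob (d (L-r)) (d (L-r-1)) M
                 + vnorm (d (L-r)) (hiA d L V r) * ee d W V (L-r)"
    unfolding ee_def M_def N_def by (intro add_mono) (simp_all add: VM)
  also have "\<dots> \<le> (R^(r-1) * S) * R + R^r * ee d W V (L-r)"
  proof (intro add_mono mult_mono)
    show "vnorm (d (L - r)) (hiA d L V r) \<le> R ^ r" using N2[OF V dL R] Suc by simp
    have "L - r \<in> {1..L}" using Suc.prems by auto
    from W[rule_format, OF this] show "frob (d (L - r)) (d (L - r - 1)) M \<le> R" unfolding M_def by simp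
  qed (use IH R S0 in \<open>auto simp: vnorm_nonneg ee_nonneg frob_nonneg\<close>)
  also have "\<dots> \<le> R^r * (S + ee d W V (L-r))"
  proof (cases r)
    case 0 then show ?thesis by (simp add: S_def)
  next
    case (Suc m') then show ?thesis by (simp add: algebra_simps)
  qed
  also have "S + ee d W V (L-r) = (\<Sum>l\<in>{L - Suc r<..L}. ee d W V l)"
  proof -
    have "{L - Suc r<..L} = insert (L-r) {L-r<..L}" using Suc.prems by auto
    then show ?thesis by (simp add: S_def)
  qed
  finally show ?case by simp
qed



lemma pow_le: "(R::real) \<ge> 1 \<Longrightarrow> a \<le> b \<Longrightarrow> R^a \<le> R^b"
  by (rule power_increasing)

lemma per_x:
  fixes zz :: "nat \<Rightarrow> real"
  assumes W: "\<forall>k\<in>{1..L}. frob (d k) (d (k-1)) (W k) \<le> R"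
    and V: "\<forall>k\<in>{1..L}. frob (d k) (d (k-1)) (V k) \<le> R"
    and z: "vnorm (d 0) zz \<le> 1" and R: "R \<ge> 1" and dL: "d L = 1" and L: "L \<ge> 1"
    and lip: "\<forall>x y. \<bar>dl x - dl y\<bar> \<le> \<beta> * \<bar>x - y\<bar>"
    and bnd: "\<forall>x. \<bar>dl x\<bar> \<le> G" and b0: "\<beta> \<ge> 0"
  shows "pnorm d L (\<lambda>k i j. dl (sfun d L zz W) * (hiA d L W (L-k) i * gv d zz W (k-1) j)
                          - dl (sfun d L zz V) * (hiA d L V (L-k) i * gv d zz V (k-1) j))
         \<le> 2 * real L ^ 2 * R ^ (2 * L - 2) * (\<beta> + G) * pnorm d L (\<lambda>k i j. W k i j - V k i j)"
proof -
  define M where "M = R^(L-1)"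
  define S where "S = (\<Sum>l\<in>{1..L}. ee d W V l)"
  define E where "E = pnorm d L (\<lambda>k i j. W k i j - V k i j)"
  have G0: "G \<ge> 0" using bnd by (meson abs_ge_zero order_trans)
  have M1: "M \<ge> 1" unfolding M_def using R by simp
  have E0: "E \<ge> 0" unfolding E_def by (rule pnorm_nonneg)
  have S0: "S \<ge> 0" unfolding S_def by (rule sum_nonneg) (simp add: ee_nonneg)
  have SE: "S \<le> real L * E"
  proof -
    have "S \<le> real (card {1..L}) * E" unfolding S_def
    proof (rule sum_bounded_above)
      fix l assume "l \<in> {1..L}"
      then show "ee d W V l \<le> E" unfolding ee_def E_def pnorm_L2
        by (rule member_le_L2_set[rotated]) simp
    qed
    then show ?thesis by simp
  qed
  have sf: "sfun d L zz U = gv d zz U L 0" for U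
    using s_fact[where d=d and L=L and r=0 and W=U and zz=zz] dL by (simp add: sfun_def)
  have ds: "\<bar>sfun d L zz W - sfun d L zz V\<bar> \<le> M * S"
  proof -
    have "\<bar>sfun d L zz W - sfun d L zz V\<bar> \<le> L2_set (\<lambda>a. \<bar>gv d zz W L a - gv d zz V L a\<bar>) {..<d L}"
      unfolding sf by (rule member_le_L2_set[where f="\<lambda>a. \<bar>gv d zz W L a - gv d zz V L a\<bar>"]) (use dL in auto)
    also have "\<dots> = vnorm (d L) (\<lambda>a. gv d zz W L a - gv d zz V L a)" by (simp add: L2_abs vnorm_L2)
    also have "\<dots> \<le> M * S" unfolding M_def S_def by (rule D1[OF W V z R]) simp
    finally show ?thesis .
  qed
  have dd: "\<bar>dl (sfun d L zz W) - dl (sfun d L zz V)\<bar> \<le> \<beta> * (M * S)"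
    using lip ds b0 by (meson mult_left_mono order_trans)
  have hn: "vnorm (d k) (hiA d L U (L-k)) \<le> R^(L-k)"
    if "k \<in> {1..L}" "\<forall>k\<in>{1..L}. frob (d k) (d (k-1)) (U k) \<le> R" for k U
    using N2[OF that(2) dL R, of "L-k"] that(1) by simp
  have gn: "vnorm (d (k-1)) (gv d zz U (k-1)) \<le> R^(k-1)"
    if "k \<in> {1..L}" "\<forall>k\<in>{1..L}. frob (d k) (d (k-1)) (U k) \<le> R" for k U
    by (rule N1[OF that(2) z R, of "k-1"]) (use that(1) in auto)
  have dh: "vnorm (d k) (\<lambda>a. hiA d L W (L-k) a - hiA d L V (L-k) a) \<le> R^(L-k-1) * S" if "k \<in> {1..L}" for k
  proof -
    have "vnorm (d k) (\<lambda>a. hiA d L W (L-k) a - hiA d L V (L-k) a) \<le> R^(L-k-1) * (\<Sum>l\<in>{L-(L-k)<..L}. ee d W V l)"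
      using D2[OF W V dL R, of "L-k"] that by simp
    also have "\<dots> \<le> R^(L-k-1) * S" unfolding S_def
      by (intro mult_left_mono sum_mono2) (use R that in \<open>auto simp: ee_nonneg\<close>)
    finally show ?thesis .
  qed
  have dg: "vnorm (d (k-1)) (\<lambda>a. gv d zz W (k-1) a - gv d zz V (k-1) a) \<le> R^(k-1-1) * S" if "k \<in> {1..L}" for k
  proof -
    have "vnorm (d (k-1)) (\<lambda>a. gv d zz W (k-1) a - gv d zz V (k-1) a) \<le> R^(k-1-1) * (\<Sum>l\<in>{1..k-1}. ee d W V l)"
      by (rule D1[OF W V z R, of "k-1"]) (use that in auto)
    also have "\<dots> \<le> R^(k-1-1) * S" unfolding S_def
      by (intro mult_left_mono sum_mono2) (use R that in \<open>auto simp: ee_nonneg\<close>)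
    finally show ?thesis .
  qed
  have P1: "pnorm d L (\<lambda>k i j. hiA d L W (L-k) i * gv d zz W (k-1) j) \<le> real L * M"
  proof (rule outer_bound)
    fix k assume k: "k \<in> {1..L}"
    have "vnorm (d k) (hiA d L W (L-k)) * vnorm (d (k-1)) (gv d zz W (k-1)) \<le> R^(L-k) * R^(k-1)"
      by (rule mult_mono) (use hn[OF k W] gn[OF k W] R in \<open>auto simp: vnorm_nonneg\<close>)
    also have "\<dots> = M" unfolding M_def power_add[symmetric] using k by simp
    finally show "vnorm (d k) (hiA d L W (L-k)) * vnorm (d (k-1)) (gv d zz W (k-1)) \<le> M" .
  qed
  have P2: "pnorm d L (\<lambda>k i j. (hiA d L W (L-k) i - hiA d L V (L-k) i) * gv d zz W (k-1) j) \<le> real L * (M * S)"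
  proof (rule outer_bound)
    fix k assume k: "k \<in> {1..L}"
    have "vnorm (d k) (\<lambda>a. hiA d L W (L-k) a - hiA d L V (L-k) a) * vnorm (d (k-1)) (gv d zz W (k-1)) \<le> (R^(L-k-1) * S) * R^(k-1)"
      by (rule mult_mono) (use dh[OF k] gn[OF k W] R S0 in \<open>auto simp: vnorm_nonneg\<close>)
    also have "\<dots> = R^(L-k-1 + (k-1)) * S" by (simp add: power_add)
    also have "\<dots> \<le> M * S" unfolding M_def
      by (rule mult_right_mono[OF pow_le[OF R]]) (use k S0 in auto)
    finally show "vnorm (d k) (\<lambda>a. hiA d L W (L-k) a - hiA d L V (L-k) a) * vnorm (d (k-1)) (gv d zz W (k-1)) \<le> M * S" .
  qed
  have P3: "pnorm d L (\<lambda>k i j. hiA d L V (L-k) i * (gv d zz W (k-1) j - gv d zz V (k-1) j)) \<le> real L * (M * S)"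
  proof (rule outer_bound)
    fix k assume k: "k \<in> {1..L}"
    have "vnorm (d k) (hiA d L V (L-k)) * vnorm (d (k-1)) (\<lambda>a. gv d zz W (k-1) a - gv d zz V (k-1) a) \<le> R^(L-k) * (R^(k-1-1) * S)"
      by (rule mult_mono) (use hn[OF k V] dg[OF k] R S0 in \<open>auto simp: vnorm_nonneg\<close>)
    also have "\<dots> = R^(L-k + (k-1-1)) * S" by (simp add: power_add)
    also have "\<dots> \<le> M * S" unfolding M_def
      by (rule mult_right_mono[OF pow_le[OF R]]) (use k S0 in auto)
    finally show "vnorm (d k) (hiA d L V (L-k)) * vnorm (d (k-1)) (\<lambda>a. gv d zz W (k-1) a - gv d zz V (k-1) a) \<le> M * S" .
  qed
  define c1 where "c1 = dl (sfun d L zz W) - dl (sfun d L zz V)"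
  define c2 where "c2 = dl (sfun d L zz V)"
  have c2: "\<bar>c2\<bar> \<le> G" using bnd c2_def by simp
  have "pnorm d L (\<lambda>k i j. dl (sfun d L zz W) * (hiA d L W (L-k) i * gv d zz W (k-1) j)
                          - dl (sfun d L zz V) * (hiA d L V (L-k) i * gv d zz V (k-1) j))
     = pnorm d L (\<lambda>k i j. (c1 * (hiA d L W (L-k) i * gv d zz W (k-1) j)
            + c2 * ((hiA d L W (L-k) i - hiA d L V (L-k) i) * gv d zz W (k-1) j))
            + c2 * (hiA d L V (L-k) i * (gv d zz W (k-1) j - gv d zz V (k-1) j)))"
    unfolding c1_def c2_def by (simp add: algebra_simps)
  also have "\<dots> \<le> (\<bar>c1\<bar> * pnorm d L (\<lambda>k i j. hiA d L W (L-k) i * gv d zz W (k-1) j)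
       + \<bar>c2\<bar> * pnorm d L (\<lambda>k i j. (hiA d L W (L-k) i - hiA d L V (L-k) i) * gv d zz W (k-1) j))
       + \<bar>c2\<bar> * pnorm d L (\<lambda>k i j. hiA d L V (L-k) i * (gv d zz W (k-1) j - gv d zz V (k-1) j))"
    by (rule order_trans[OF pnorm_add add_mono[OF order_trans[OF pnorm_add]]]) (simp_all add: pnorm_scale)
  also have "\<dots> \<le> (\<beta> * (M * S) * (real L * M) + G * (real L * (M * S))) + G * (real L * (M * S))"
    by (intro add_mono mult_mono) (use dd c2 P1 P2 P3 G0 b0 M1 S0 in \<open>auto simp: c1_def pnorm_nonneg\<close>)
  also have "\<dots> = real L * S * M * (\<beta> * M + 2 * G)" by (simp add: algebra_simps)
  also have "\<dots> \<le> real L * (real L * E) * M * (\<beta> * M + 2 * G)"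
    by (intro mult_right_mono mult_left_mono SE) (use M1 b0 G0 in auto)
  also have "\<dots> \<le> real L * (real L * E) * M * (2 * M * (\<beta> + G))"
  proof (rule mult_left_mono)
    have a1: "2*G \<le> 2*M*G" using mult_right_mono[OF M1 G0] by simp
    have a2: "\<beta>*M \<le> 2*M*\<beta>" using b0 M1 by simp
    have a3: "2*M*(\<beta>+G) = 2*M*\<beta> + 2*M*G" by (simp add: algebra_simps)
    show "\<beta> * M + 2 * G \<le> 2 * M * (\<beta> + G)" using a1 a2 a3 by linarith
  qed (use M1 E0 in auto)
  also have "\<dots> = 2 * real L ^ 2 * (M * M) * (\<beta> + G) * E" by (simp add: algebra_simps power2_eq_square)
  also have "M * M = R ^ (2 * L - 2)" unfolding M_def power_add[symmetric] by (rule arg_cong[where f="power R"]) simp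
  finally show ?thesis unfolding E_def .
qed



theorem mainTheorem8:
  fixes loss dl :: "real \<Rightarrow> real" and \<beta> G R :: real
    and n L :: nat and d :: "nat \<Rightarrow> nat" and z :: "nat \<Rightarrow> nat \<Rightarrow> real"
  assumes L: "L \<ge> 1" and dL: "d L = 1"
    and z: "\<forall>i<n. vnorm (d 0) (z i) \<le> 1"
    and deriv_l: "\<forall>x. (loss has_real_derivative dl x) (at x)"
    and lip: "\<forall>x y. \<bar>dl x - dl y\<bar> \<le> \<beta> * \<bar>x - y\<bar>"
    and bnd: "\<forall>x. \<bar>dl x\<bar> \<le> G"
    and R: "R \<ge> 1"
  shows "\<forall>W\<in>ball_R d L R. \<forall>V\<in>ball_R d L R.
           pnorm d L (\<lambda>k i j. grad (risk loss n z d L) W k i j - grad (risk loss n z d L) V k i j)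
             \<le> 2 * real L ^ 2 * R ^ (2 * L - 2) * (\<beta> + G) * pnorm d L (\<lambda>k i j. W k i j - V k i j)"
proof (intro ballI)
  fix W V assume WB: "W \<in> ball_R d L R" and VB: "V \<in> ball_R d L R"
  have hW: "\<forall>k\<in>{1..L}. frob (d k) (d (k-1)) (W k) \<le> R" using WB by (simp add: ball_R_def)
  have hV: "\<forall>k\<in>{1..L}. frob (d k) (d (k-1)) (V k) \<le> R" using VB by (simp add: ball_R_def)
  have "\<bar>dl 1 - dl 0\<bar> \<le> \<beta>" using lip[rule_format, of 1 0] by simp
  then have b0: "\<beta> \<ge> 0" using abs_ge_zero[of "dl 1 - dl 0"] by linarith
  have G0: "G \<ge> 0" using bnd[rule_format, of 0] abs_ge_zero[of "dl 0"] by linarith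
  define C where "C = 2 * real L ^ 2 * R ^ (2 * L - 2) * (\<beta> + G) * pnorm d L (\<lambda>k i j. W k i j - V k i j)"
  have C0: "C \<ge> 0" unfolding C_def using b0 G0 R by (simp add: pnorm_nonneg)
  define F where "F x k i j = dl (sfun d L (z x) W) * (hiA d L W (L-k) i * gv d (z x) W (k-1) j)
                          - dl (sfun d L (z x) V) * (hiA d L V (L-k) i * gv d (z x) V (k-1) j)" for x k i j
  have "pnorm d L (\<lambda>k i j. grad (risk loss n z d L) W k i j - grad (risk loss n z d L) V k i j)
      = pnorm d L (\<lambda>k i j. 1 / real n * (\<Sum>x<n. F x k i j))"
  proof (rule pnorm_cong)
    fix k i j assume "k \<in> {1..L}" "i < d k" "j < d (k-1)"
    then show "grad (risk loss n z d L) W k i j - grad (risk loss n z d L) V k i j = 1 / real n * (\<Sum>x<n. F x k i j)"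
      using grad_formula[where d=d and L=L and loss=loss and dl=dl and W=W, OF dL deriv_l]
        grad_formula[where d=d and L=L and loss=loss and dl=dl and W=V, OF dL deriv_l]
      by (simp add: F_def sum_subtractf right_diff_distrib)
  qed
  also have "\<dots> = 1 / real n * pnorm d L (\<lambda>k i j. \<Sum>x<n. F x k i j)" using pnorm_scale[of d L "1 / real n" "\<lambda>k i j. \<Sum>x<n. F x k i j"] by simp
  also have "\<dots> \<le> 1 / real n * (\<Sum>x<n. pnorm d L (F x))"
    by (rule mult_left_mono[OF pnorm_sum]) auto
  also have "\<dots> \<le> 1 / real n * (real (card {..<n}) * C)"
  proof (rule mult_left_mono[OF sum_bounded_above])
    fix x assume "x \<in> {..<n}"
    then have zx: "vnorm (d 0) (z x) \<le> 1" using z by simp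
    show "pnorm d L (F x) \<le> C" unfolding F_def[abs_def] C_def
      by (rule per_x[OF hW hV zx R dL L lip bnd b0])
  qed simp
  also have "\<dots> \<le> C" using C0 by (cases "n = 0") auto
  finally show "pnorm d L (\<lambda>k i j. grad (risk loss n z d L) W k i j - grad (risk loss n z d L) V k i j) \<le> C" .
qed

end
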